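(* If $G \le \mathrm{Sym}(\mathbb{N})$ is a cofinitary group that is eventually bounded, then $G$ is not a maximal cofinitary group. In particular, no maximal cofinitary group is a $K_\sigma$ subset of $\mathbb{N}^{\mathbb{N}}$.
   Context: $\mathrm{Sym}(\mathbb{N})\subseteq\mathbb{N}^{\mathbb{N}}$ is the group of bijections of $\mathbb{N}$, with the topology inherited from Baire space. A subgroup is cofinitary if each non-identity element has finitely many fixed points, and maximal cofinitary if it is cofinitary and not properly contained in another cofinitary subgroup. For $f,g\in\mathbb{N}^{\mathbb{N}}$, $f<^* g$ means $f(n)<g(n)$ for all but finitely many $n$; a set $S\subseteq\mathbb{N}^{\mathbb{N}}$ is eventually bounded if there is $f\in\mathbb{N}^{\mathbb{N}}$ with $g<^*f$ for all $g\in S$. A set is $K_\sigma$ if it is contained in a countable union of compact sets. *)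

theory Defs
  imports "HOL-Analysis.Analysis"
begin

text \<open>Baire space is nat => nat with the product topology (Function_Topology);
  nat carries its discrete (metric) topology.\<close>

definition Sym_subgroup :: "(nat \<Rightarrow> nat) set \<Rightarrow> bool" where
  "Sym_subgroup G \<longleftrightarrow> G \<subseteq> {f. bij f} \<and> id \<in> G \<and>
     (\<forall>f\<in>G. \<forall>g\<in>G. f \<circ> g \<in> G) \<and> (\<forall>f\<in>G. inv f \<in> G)"

definition cofinitary :: "(nat \<Rightarrow> nat) set \<Rightarrow> bool" where
  "cofinitary G \<longleftrightarrow> Sym_subgroup G \<and> (\<forall>g\<in>G. g \<noteq> id \<longrightarrow> finite {n. g n = n})"

definition maximal_cofinitary :: "(nat \<Rightarrow> nat) set \<Rightarrow> bool" where
  "maximal_cofinitary G \<longleftrightarrow> cofinitary G \<and> \<not> (\<exists>H. cofinitary H \<and> G \<subset> H)"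

definition eventually_less :: "(nat \<Rightarrow> nat) \<Rightarrow> (nat \<Rightarrow> nat) \<Rightarrow> bool" where
  "eventually_less f g \<longleftrightarrow> finite {n. \<not> f n < g n}"

definition eventually_bounded :: "(nat \<Rightarrow> nat) set \<Rightarrow> bool" where
  "eventually_bounded S \<longleftrightarrow> (\<exists>f. \<forall>g\<in>S. eventually_less g f)"

definition K_sigma :: "(nat \<Rightarrow> nat) set \<Rightarrow> bool" where
  "K_sigma S \<longleftrightarrow> (\<exists>K :: nat \<Rightarrow> (nat \<Rightarrow> nat) set. (\<forall>i. compact (K i)) \<and> S \<subseteq> (\<Union>i. K i))"

end

theory Submission
  imports Defs "HOL-Library.Nat_Bijection"
begin


primrec hh :: "(nat \<Rightarrow> nat) \<Rightarrow> nat \<Rightarrow> nat" where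
  "hh f 0 = f 1 + 2"
| "hh f (Suc i) = f (hh f i) + f (2*i+3) + 2"

lemma sigma_exists:
  fixes f :: "nat \<Rightarrow> nat"
  assumes mf: "mono f" and fgt: "\<And>n. n < f n"
  shows "\<exists>s s' S. s \<circ> s' = id \<and> s' \<circ> s = id \<and> (\<forall>x. s x \<noteq> x) \<and> (\<forall>x. x < s x \<or> x < s' x)
     \<and> (\<forall>x. x \<notin> S \<longrightarrow> f x \<le> s x \<and> f x \<le> s' x) \<and> (\<forall>x y. x \<in> S \<longrightarrow> y \<in> S \<longrightarrow> x < y \<longrightarrow> f x \<le> y)
     \<and> infinite (- S)"
proof -
  define h where "h = hh f"
  have hstep: "h i + 2 \<le> h (Suc i)" for i using fgt[of "h i"] by (simp add: h_def)
  have hsm: "strict_mono h"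
  proof (rule strict_monoI_Suc)
    fix n show "h n < h (Suc n)" using hstep[of n] by linarith
  qed
  have hf: "f (2*k+1) \<le> h k" for k by (cases k) (auto simp: h_def numeral_eq_Suc)
  have hsep: "i < j \<Longrightarrow> f (h i) \<le> h j" for i j
  proof -
    assume "i < j"
    hence "h (Suc i) \<le> h j" using hsm by (simp add: strict_mono_less_eq)
    moreover have "f (h i) \<le> h (Suc i)" by (simp add: h_def)
    ultimately show ?thesis by simp
  qed
  define A where "A = range h"
  have injh: "inj h" using hsm strict_mono_imp_inj_on by blast
  have noconsec: "x \<in> A \<Longrightarrow> Suc x \<notin> A" for x
  proof
    assume "x \<in> A" "Suc x \<in> A"
    then obtain i j where ij: "x = h i" "Suc x = h j" by (auto simp: A_def)
    have "i < j" using ij hsm by (metis lessI strict_mono_less not_less_iff_gr_or_eq)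
    hence "h (Suc i) \<le> h j" using hsm by (simp add: strict_mono_less_eq)
    thus False using hstep[of i] ij by simp
  qed
  have infA: "infinite (- A)"
  proof -
    have "range (\<lambda>i. Suc (h i)) \<subseteq> - A" using noconsec by (auto simp: A_def)
    moreover have "inj (\<lambda>i. Suc (h i))" using injh by (auto simp: inj_def)
    ultimately show ?thesis using range_inj_infinite infinite_super by blast
  qed
  define r where "r = enumerate (- A)"
  have rin: "r k \<notin> A" for k using enumerate_in_set[OF infA] by (simp add: r_def)
  have rsm: "strict_mono r" using enumerate_mono[OF _ infA] by (simp add: r_def strict_mono_def)
  have injr: "inj r" using rsm strict_mono_imp_inj_on by blast
  have rsurj: "x \<notin> A \<Longrightarrow> \<exists>k. r k = x" for x using enumerate_Ex[OF infA] by (simp add: r_def)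
  have rbound: "r k \<le> 2*k+1" for k
  proof (induction k)
    case 0
    have "r 0 = (LEAST n. n \<in> - A)" by (simp add: r_def enumerate_0)
    moreover have "0 \<notin> A \<or> 1 \<notin> A" using noconsec[of 0] by auto
    ultimately show ?case by (metis (mono_tags, lifting) ComplI Least_le le_zero_eq linorder_le_cases One_nat_def mult_0_right add_0 zero_le_one order_trans)
  next
    case (Suc k)
    have e: "r (Suc k) = (LEAST s. s \<in> - A \<and> r k < s)" unfolding r_def by (rule enumerate_Suc''[OF infA])
    have "Suc (r k) \<notin> A \<or> Suc (Suc (r k)) \<notin> A" using noconsec by blast
    hence "r (Suc k) \<le> Suc (Suc (r k))" unfolding e by (metis (no_types, lifting) ComplI Least_le lessI less_SucI order_trans le_Suc_eq)
    thus ?case using Suc by simp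
  qed
  define pe where "pe = (\<lambda>k j. prod_encode (k, j))"
  have pe_mono: "j < j' \<Longrightarrow> pe k j < pe k j'" for k j j'
  proof -
    assume "j < j'"
    hence "triangle (k+j) < triangle (k+j')"
      by (metis add_less_cancel_left lessI less_le_trans strict_mono_def strict_monoI_Suc triangle_Suc
          add_Suc_right le_add1 less_add_Suc1 not_less_eq)
    thus ?thesis by (simp add: pe_def prod_encode_def)
  qed
  have invh: "inv h (h i) = i" for i using injh by simp
  have invr: "inv r (r k) = k" for k using injr by simp
  have hA: "h i \<in> A" for i by (simp add: A_def)
  have pedec: "prod_decode (pe k j) = (k, j)" for k j by (simp add: pe_def)
  have cases_x: "(\<exists>k. x = r k) \<or> (\<exists>k j. x = h (pe k j))" for x
  proof (cases "x \<in> A")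
    case True
    then obtain i where "x = h i" by (auto simp: A_def)
    moreover obtain k j where "prod_decode i = (k, j)" by (cases "prod_decode i")
    hence "i = pe k j" by (metis pe_def prod_decode_inverse)
    ultimately show ?thesis by blast
  next
    case False thus ?thesis using rsurj by metis
  qed
  define s where "s x = (if x \<in> A then (case prod_decode (inv h x) of (k,j) \<Rightarrow>
      if even j then h (pe k (j+2)) else if j = 1 then r k else h (pe k (j-2))) else h (pe (inv r x) 0))" for x
  define s' where "s' x = (if x \<in> A then (case prod_decode (inv h x) of (k,j) \<Rightarrow>
      if odd j then h (pe k (j+2)) else if j = 0 then r k else h (pe k (j-2))) else h (pe (inv r x) 1))" for x
  have sr: "s (r k) = h (pe k 0)" for k using rin by (simp add: s_def invr)
  have s'r: "s' (r k) = h (pe k 1)" for k using rin by (simp add: s'_def invr)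
  have sh: "s (h (pe k j)) = (if even j then h (pe k (j+2)) else if j = 1 then r k else h (pe k (j-2)))" for k j
    using hA by (simp add: s_def invh pedec)
  have s'h: "s' (h (pe k j)) = (if odd j then h (pe k (j+2)) else if j = 0 then r k else h (pe k (j-2)))" for k j
    using hA by (simp add: s'_def invh pedec)
  have ar1: "0 < b \<Longrightarrow> Suc (Suc (2*b - 2)) = 2*b" for b :: nat by arith
  have ar2: "0 < b \<Longrightarrow> Suc (Suc (Suc (2*b) - 2)) = Suc (2*b)" for b :: nat by arith
  have ss': "s (s' x) = x" for x
    using cases_x[of x] by (auto simp: sr s'r sh s'h ar1 ar2 elim!: oddE evenE)
  have s's: "s' (s x) = x" for x
    using cases_x[of x] by (auto simp: sr s'r sh s'h ar1 ar2 elim!: oddE evenE)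
  have hmono: "h a < h b \<longleftrightarrow> a < b" for a b using hsm by (simp add: strict_mono_less)
  have hle: "h a \<le> h b \<longleftrightarrow> a \<le> b" for a b using hsm by (simp add: strict_mono_less_eq)
  have rne: "r k \<noteq> h i" for k i using rin hA by metis
  have k_pe: "k \<le> pe k 0" for k by (simp add: pe_def prod_encode_def)
  have pe01: "pe k 0 < pe k 1" for k by (rule pe_mono) simp
  have fr: "f (r k) \<le> h (pe k 0)" for k
  proof -
    have "f (r k) \<le> f (2*k+1)" using rbound mf by (simp add: monoD)
    also have "\<dots> \<le> h k" by (rule hf)
    also have "\<dots> \<le> h (pe k 0)" using k_pe hle by simp
    finally show ?thesis .
  qed
  have P1: "s x \<noteq> x" for x
  proof -
    { fix k assume "x = r k" hence ?thesis using rne by (metis sr) }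
    moreover
    { fix k j assume x: "x = h (pe k j)"
      have "pe k (j+2) \<noteq> pe k j" using pe_mono[of j "j+2" k] by simp
      moreover have "j \<noteq> 1 \<Longrightarrow> odd j \<Longrightarrow> pe k (j-2) \<noteq> pe k j"
      proof -
        assume "odd j" hence "0 < j" by (simp add: odd_pos)
        hence "j - 2 < j" by simp
        thus ?thesis using pe_mono[of "j-2" j k] by simp
      qed
      ultimately have ?thesis using x rne injh by (auto simp: sh inj_eq) }
    ultimately show ?thesis using cases_x[of x] by blast
  qed
  have P2: "x < s x \<or> x < s' x" for x
  proof -
    { fix k assume "x = r k" hence ?thesis using fr[of k] fgt[of "r k"] by (simp add: sr) }
    moreover
    { fix k j assume x: "x = h (pe k j)"
      have "pe k j < pe k (j+2)" by (rule pe_mono) simp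
      hence ?thesis using x by (auto simp: sh s'h hmono) }
    ultimately show ?thesis using cases_x[of x] by blast
  qed
  have P3: "x \<notin> A \<Longrightarrow> f x \<le> s x \<and> f x \<le> s' x" for x
  proof -
    assume "x \<notin> A"
    then obtain k where x: "x = r k" using rsurj by metis
    have "h (pe k 0) \<le> h (pe k 1)" using less_imp_le[OF pe01[of k]] hle by simp
    thus ?thesis using fr[of k] x by (simp add: sr s'r)
  qed
  have P4: "x \<in> A \<Longrightarrow> y \<in> A \<Longrightarrow> x < y \<Longrightarrow> f x \<le> y" for x y
    using hsep hmono by (auto simp: A_def)
  show ?thesis
    apply (rule exI[of _ s], rule exI[of _ s'], rule exI[of _ A])
    using ss' s's P1 P2 P3 P4 infA by (auto simp: fun_eq_iff)
qed


definition ev :: "(nat \<Rightarrow> nat) list \<Rightarrow> nat \<Rightarrow> nat" where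
  "ev ws = foldr (\<circ>) ws id"

lemma ev_Nil[simp]: "ev [] = id" by (simp add: ev_def)
lemma ev_Cons[simp]: "ev (a # ws) = a \<circ> ev ws" by (simp add: ev_def)
lemma ev_append[simp]: "ev (xs @ ys) = ev xs \<circ> ev ys" by (induction xs) auto

definition Fix :: "(nat \<Rightarrow> nat) \<Rightarrow> nat set" where "Fix g = {x. g x = x}"

locale W =
  fixes G :: "(nat \<Rightarrow> nat) set" and f s s' :: "nat \<Rightarrow> nat" and S :: "nat set"
  assumes cof: "cofinitary G"
  and bnd: "\<forall>g\<in>G. finite {n. \<not> g n < f n}"
  and mf: "mono f" and fgt: "\<forall>n. n < f n"
  and ss': "s \<circ> s' = id" and s's: "s' \<circ> s = id"
  and P1: "\<forall>x. s x \<noteq> x" and P2: "\<forall>x. x < s x \<or> x < s' x"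
  and P3: "\<forall>x. x \<notin> S \<longrightarrow> f x \<le> s x \<and> f x \<le> s' x"
  and P4: "\<forall>x y. x \<in> S \<longrightarrow> y \<in> S \<longrightarrow> x < y \<longrightarrow> f x \<le> y"
  and infS: "infinite (- S)"
begin

definition L where "L = G \<union> {s, s'}"

definition okp where "okp a b \<longleftrightarrow> \<not> (a \<in> G \<and> b \<in> G) \<and> \<not> (a = s \<and> b = s') \<and> \<not> (a = s' \<and> b = s)"

lemma Gsub: "Sym_subgroup G" using cof by (simp add: cofinitary_def)
lemma Gbij: "g \<in> G \<Longrightarrow> bij g" using Gsub by (auto simp: Sym_subgroup_def)
lemma Gid: "id \<in> G" using Gsub by (auto simp: Sym_subgroup_def)
lemma Gcomp: "g \<in> G \<Longrightarrow> h \<in> G \<Longrightarrow> g \<circ> h \<in> G" using Gsub by (auto simp: Sym_subgroup_def)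
lemma Ginv: "g \<in> G \<Longrightarrow> inv g \<in> G" using Gsub by (auto simp: Sym_subgroup_def)
lemma Gfin: "g \<in> G \<Longrightarrow> g \<noteq> id \<Longrightarrow> finite (Fix g)" using cof by (auto simp: cofinitary_def Fix_def)

lemma ss'x[simp]: "s (s' x) = x" using ss' by (simp add: fun_eq_iff)
lemma s'sx[simp]: "s' (s x) = x" using s's by (simp add: fun_eq_iff)
lemma bij_s: "bij s" using o_bij[OF s's ss'] .
lemma bij_s': "bij s'" using o_bij[OF ss' s's] .
lemma inv_s: "inv s = s'" by (rule inv_unique_comp[OF ss' s's])
lemma inv_s': "inv s' = s" by (rule inv_unique_comp[OF s's ss'])

lemma s_notin: "s \<notin> G"
proof
  assume "s \<in> G"
  hence "finite {n. \<not> s n < f n}" using bnd by auto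
  moreover have "- S \<subseteq> {n. \<not> s n < f n}" using P3 by force
  ultimately show False using infS finite_subset by blast
qed

lemma s'_notin: "s' \<notin> G"
proof
  assume "s' \<in> G"
  hence "finite {n. \<not> s' n < f n}" using bnd by auto
  moreover have "- S \<subseteq> {n. \<not> s' n < f n}" using P3 by force
  ultimately show False using infS finite_subset by blast
qed

lemma s_ne_s': "s \<noteq> s'"
proof
  assume e: "s = s'"
  have "0 < s 0" using P2 e by metis
  moreover have "s 0 < s (s 0)" using P2 e by metis
  moreover have "s (s 0) = 0" using e by (metis ss'x)
  ultimately show False by simp
qed

lemma L_bij: "a \<in> L \<Longrightarrow> bij a" using Gbij bij_s bij_s' by (auto simp: L_def)
lemma ev_bij: "set ws \<subseteq> L \<Longrightarrow> bij (ev ws)"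
  by (induction ws) (auto intro: bij_comp L_bij)

lemma L2:
  assumes "y \<le> z" "y \<noteq> z" "z < f y" "v = s z \<or> v = s' z" "v \<le> z" "u = s y \<or> u = s' y" "u \<le> z"
  shows False
proof -
  have zS: "z \<in> S"
  proof (rule ccontr)
    assume "z \<notin> S" hence "f z \<le> v" using P3 assms(4) by auto
    thus False using fgt assms(5) by (meson leD le_less_trans)
  qed
  have yS: "y \<in> S"
  proof (rule ccontr)
    assume "y \<notin> S" hence "f y \<le> u" using P3 assms(6) by auto
    thus False using assms(3,7) by simp
  qed
  have "f y \<le> z" using P4 zS yS assms(1,2) by simp
  thus False using assms(3) by simp
qed

lemma letter_cases: "a \<in> L \<Longrightarrow> a \<notin> G \<Longrightarrow> a = s \<or> a = s'" by (auto simp: L_def)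

lemma inv_letter: "a = s \<or> a = s' \<Longrightarrow> y = a u \<Longrightarrow> u = s y \<or> u = s' y" by auto

lemma main:
  assumes L: "set ws \<subseteq> L" and noid: "id \<notin> set ws" and ne: "ws \<noteq> []"
  and cyc: "\<forall>i<length ws. okp (ws!i) (ws!(Suc i mod length ws))"
  shows "finite (Fix (ev ws))"
proof -
  define m where "m = length ws"
  have m0: "0 < m" using ne by (simp add: m_def)
  define Gl where "Gl = set ws \<inter> G"
  define bad where "bad g = {y. g y = y} \<union> {y. \<not> g y < f y} \<union> {y. \<not> inv g y < f y}" for g
  have "\<forall>g\<in>Gl. finite (bad g)"
    using noid Gfin bnd Ginv by (auto simp: Gl_def Fix_def bad_def)
  hence "finite (\<Union>g\<in>Gl. bad g)" by (auto simp: Gl_def)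
  then obtain T where T: "(\<Union>g\<in>Gl. bad g) \<subseteq> {..<T}" using finite_nat_bounded by blast
  have Tg: "g \<in> Gl \<Longrightarrow> T \<le> y \<Longrightarrow> g y \<noteq> y \<and> g y < f y \<and> inv g y < f y" for g y
  proof -
    assume "g \<in> Gl" "T \<le> y"
    hence "y \<notin> bad g" using T by force
    thus ?thesis by (auto simp: bad_def)
  qed
  define B where "B = (\<Union>i\<in>{..m}. ev (drop i ws) -` {..<T})"
  have "finite B" unfolding B_def
  proof (rule finite_UN_I)
    fix i
    have "bij (ev (drop i ws))" using L by (intro ev_bij) (meson in_mono set_drop_subset subsetI)
    thus "finite (ev (drop i ws) -` {..<T})" by (intro finite_vimageI) (auto simp: bij_def)
  qed simp
  moreover have "Fix (ev ws) \<subseteq> B"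
  proof
    fix x assume x: "x \<in> Fix (ev ws)"
    show "x \<in> B"
    proof (rule ccontr)
      assume xB: "x \<notin> B"
      define p where "p i = ev (drop i ws) x" for i
      have pT: "i \<le> m \<Longrightarrow> T \<le> p i" for i using xB by (auto simp: B_def p_def not_less)
      have p0: "p 0 = p m" using x by (simp add: p_def Fix_def m_def)
      have pstep: "i < m \<Longrightarrow> p i = (ws!i) (p (Suc i))" for i
        by (simp add: p_def m_def Cons_nth_drop_Suc[symmetric])
      define nx where "nx i = Suc i mod m" for i
      define pv where "pv i = (i + m - 1) mod m" for i
      have nxl: "nx i < m" for i using m0 by (simp add: nx_def)
      have pvl: "pv i < m" for i using m0 by (simp add: pv_def)
      have nxpv: "i < m \<Longrightarrow> nx (pv i) = i" for i
      proof -
        assume "i < m"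
        show ?thesis
        proof (cases i)
          case 0 thus ?thesis using m0 by (simp add: nx_def pv_def)
        next
          case (Suc j) thus ?thesis using \<open>i < m\<close> by (simp add: nx_def pv_def)
        qed
      qed
      have pnx: "i < m \<Longrightarrow> p i = (ws!i) (p (nx i))" for i
      proof -
        assume im: "i < m"
        show ?thesis
        proof (cases "Suc i < m")
          case True thus ?thesis using pstep im by (simp add: nx_def)
        next
          case False hence "Suc i = m" using im by simp
          thus ?thesis using pstep[OF im] p0 by (simp add: nx_def)
        qed
      qed
      have okk: "i < m \<Longrightarrow> okp (ws!i) (ws!(nx i))" for i using cyc by (simp add: nx_def m_def)
      have wL: "i < m \<Longrightarrow> ws!i \<in> L" for i using L by (simp add: m_def subset_iff)
      have wGl: "i < m \<Longrightarrow> ws!i \<in> G \<Longrightarrow> ws!i \<in> Gl" for i by (simp add: Gl_def m_def)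
      obtain k where k: "k < m" "\<forall>i<m. p i \<le> p k"
      proof -
        have fin: "finite (p ` {..<m})" "p ` {..<m} \<noteq> {}" using m0 by auto
        from Max_in[OF fin] obtain k where "k < m" "p k = Max (p ` {..<m})" by (metis imageE lessThan_iff)
        moreover have "\<forall>i<m. p i \<le> Max (p ` {..<m})" using fin by auto
        ultimately show ?thesis using that by metis
      qed
      define z where "z = p k"
      have zT: "T \<le> z" using pT k by (simp add: z_def)
      show False
      proof (cases "ws!k \<in> G")
        case bG: True
        define y where "y = p (nx k)"
        have zy: "z = (ws!k) y" using pnx k by (simp add: z_def y_def)
        have yT: "T \<le> y" using pT nxl by (simp add: y_def less_imp_le)
        have b1: "(ws!k) y \<noteq> y \<and> (ws!k) y < f y" using Tg[OF wGl[OF k(1) bG] yT] by simp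
        have yz: "y \<le> z" using k nxl by (simp add: y_def z_def)
        have cnG: "ws!(nx k) \<notin> G" using okk[OF k(1)] bG by (simp add: okp_def)
        have c: "ws!(nx k) = s \<or> ws!(nx k) = s'" using letter_cases[OF wL[OF nxl] cnG] .
        define u where "u = p (nx (nx k))"
        have "y = (ws!(nx k)) u" using pnx[OF nxl[of k]] by (simp add: y_def u_def)
        hence u: "u = s y \<or> u = s' y" using inv_letter[OF c] by blast
        have uz: "u \<le> z" using k nxl by (simp add: u_def z_def)
        have anG: "ws!(pv k) \<notin> G" using okk[OF pvl[of k]] bG nxpv[OF k(1)] by (simp add: okp_def)
        have a: "ws!(pv k) = s \<or> ws!(pv k) = s'" using letter_cases[OF wL[OF pvl] anG] .
        define v where "v = p (pv k)"
        have "v = (ws!(pv k)) z" using pnx[OF pvl[of k]] nxpv[OF k(1)] by (simp add: v_def z_def)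
        hence v: "v = s z \<or> v = s' z" using a by auto
        have vz: "v \<le> z" using k pvl by (simp add: v_def z_def)
        show False using L2[OF yz _ _ v vz u uz] b1 zy by auto
      next
        case bnG: False
        show False
        proof (cases "ws!(pv k) \<in> G")
          case aG: True
          define y where "y = p (pv k)"
          have yza: "y = (ws!(pv k)) z" using pnx[OF pvl[of k]] nxpv[OF k(1)] by (simp add: y_def z_def)
          have yT: "T \<le> y" using pT pvl by (simp add: y_def less_imp_le)
          have a1: "(ws!(pv k)) z \<noteq> z" using Tg[OF wGl[OF pvl aG] zT] by simp
          have "inv (ws!(pv k)) y < f y" using Tg[OF wGl[OF pvl aG] yT] by simp
          moreover have "inv (ws!(pv k)) y = z" using yza Gbij[OF aG] by (simp add: bij_def)
          ultimately have zfy: "z < f y" by simp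
          have yz: "y \<le> z" using k pvl by (simp add: y_def z_def)
          have dnG: "ws!(pv (pv k)) \<notin> G" using okk[OF pvl[of "pv k"]] aG nxpv[OF pvl[of k]] by (simp add: okp_def)
          have d: "ws!(pv (pv k)) = s \<or> ws!(pv (pv k)) = s'" using letter_cases[OF wL[OF pvl] dnG] .
          define u where "u = p (pv (pv k))"
          have "u = (ws!(pv (pv k))) y" using pnx[OF pvl[of "pv k"]] nxpv[OF pvl[of k]] by (simp add: y_def u_def)
          hence u: "u = s y \<or> u = s' y" using d by auto
          have uz: "u \<le> z" using k pvl by (simp add: u_def z_def)
          have b: "ws!k = s \<or> ws!k = s'" using letter_cases[OF wL[OF k(1)] bnG] .
          define v where "v = p (nx k)"
          have "z = (ws!k) v" using pnx k by (simp add: z_def v_def)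
          hence v: "v = s z \<or> v = s' z" using inv_letter[OF b] by blast
          have vz: "v \<le> z" using k nxl by (simp add: v_def z_def)
          show False using L2[OF yz _ zfy v vz u uz] a1 yza by auto
        next
          case anG: False
          have a: "ws!(pv k) = s \<or> ws!(pv k) = s'" using letter_cases[OF wL[OF pvl] anG] .
          have b: "ws!k = s \<or> ws!k = s'" using letter_cases[OF wL[OF k(1)] bnG] .
          have ab: "ws!(pv k) = ws!k" using okk[OF pvl[of k]] nxpv[OF k(1)] a b by (auto simp: okp_def)
          have v1: "p (pv k) = (ws!k) z" using pnx[OF pvl[of k]] nxpv[OF k(1)] ab by (simp add: z_def)
          have v2: "z = (ws!k) (p (nx k))" using pnx k by (simp add: z_def)
          have l1: "p (pv k) \<le> z" "p (nx k) \<le> z" using k pvl nxl by (auto simp: z_def)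
          show False
          proof (cases "ws!k = s")
            case True
            hence "s z \<le> z" "s' z \<le> z" using v1 v2 l1 by auto
            thus False using P2 by (meson leD)
          next
            case False
            hence "ws!k = s'" using b by simp
            hence "s' z \<le> z" "s z \<le> z" using v1 v2 l1 by auto
            thus False using P2 by (meson leD)
          qed
        qed
      qed
    qed
  qed
  ultimately show ?thesis using finite_subset by blast
qed

lemma split2: "Suc i < length ws \<Longrightarrow> ws = take i ws @ ws!i # ws!(Suc i) # drop (Suc (Suc i)) ws"
  by (metis Cons_nth_drop_Suc Suc_lessD append_take_drop_id)

lemma split1: "i < length ws \<Longrightarrow> ws = take i ws @ ws!i # drop (Suc i) ws"
  by (simp add: id_take_nth_drop)

lemma ends: "2 \<le> length ws \<Longrightarrow> \<exists>a mid b. ws = a # mid @ [b]"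
  by (cases ws; cases "tl ws" rule: rev_exhaust) auto

lemma fix_vimage: "(\<And>x. h x = x \<Longrightarrow> h' (c x) = c x) \<Longrightarrow> Fix h \<subseteq> c -` Fix h'"
  by (auto simp: Fix_def)

lemma reduce: "set ws \<subseteq> L \<Longrightarrow> ev ws \<in> G \<or> finite (Fix (ev ws))"
proof (induction "length ws" arbitrary: ws rule: less_induct)
  case less
  note IH = less.hyps and wsL = less.prems
  show ?case
  proof (cases "\<exists>i. i < length ws \<and> ws!i = id")
    case True
    then obtain i where i: "i < length ws" "ws!i = id" by blast
    define ws' where "ws' = take i ws @ drop (Suc i) ws"
    have "ev ws = ev ws'" using split1[OF i(1)] i(2) unfolding ws'_def by (metis ev_append ev_Cons id_comp)
    moreover have "length ws' < length ws" using i by (simp add: ws'_def)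
    moreover have "set ws' \<subseteq> L" using wsL by (auto simp: ws'_def dest: in_set_takeD in_set_dropD)
    ultimately show ?thesis using IH by metis
  next
    case noid: False
    show ?thesis
    proof (cases "\<exists>i. Suc i < length ws \<and> ((ws!i \<in> G \<and> ws!Suc i \<in> G) \<or> ws!i \<circ> ws!Suc i = id)")
      case True
      then obtain i where i: "Suc i < length ws" "(ws!i \<in> G \<and> ws!Suc i \<in> G) \<or> ws!i \<circ> ws!Suc i = id" by blast
      show ?thesis
      proof (cases "ws!i \<circ> ws!Suc i = id")
        case True
        define ws' where "ws' = take i ws @ drop (Suc (Suc i)) ws"
        have "ev ws = ev ws'" using split2[OF i(1)] True unfolding ws'_def
          by (metis ev_append ev_Cons comp_assoc id_comp)
        moreover have "length ws' < length ws" using i by (simp add: ws'_def)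
        moreover have "set ws' \<subseteq> L" using wsL by (auto simp: ws'_def dest: in_set_takeD in_set_dropD)
        ultimately show ?thesis using IH by metis
      next
        case False
        hence gg: "ws!i \<in> G" "ws!Suc i \<in> G" using i by auto
        define ws' where "ws' = take i ws @ (ws!i \<circ> ws!Suc i) # drop (Suc (Suc i)) ws"
        have "ev ws = ev ws'" using split2[OF i(1)] unfolding ws'_def
          by (metis ev_append ev_Cons comp_assoc)
        moreover have "length ws' < length ws" using i by (simp add: ws'_def)
        moreover have "set ws' \<subseteq> L" using wsL Gcomp[OF gg]
          by (auto simp: ws'_def L_def dest: in_set_takeD in_set_dropD)
        ultimately show ?thesis using IH by metis
      qed
    next
      case nopair: False
      show ?thesis
      proof (cases "length ws \<le> 1")
        case True
        show ?thesis
        proof (cases ws)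
          case Nil thus ?thesis using Gid by simp
        next
          case (Cons a rest)
          hence ws: "ws = [a]" using True by simp
          hence "a \<in> L" using wsL by simp
          moreover have "Fix s = {}" "Fix s' = {}" using P1 by (auto simp: Fix_def) (metis ss'x)
          ultimately show ?thesis using ws by (auto simp: L_def)
        qed
      next
        case False
        hence "2 \<le> length ws" by simp
        then obtain a mid b where ws: "ws = a # mid @ [b]" using ends by blast
        have aL: "a \<in> L" and bL: "b \<in> L" and midL: "set mid \<subseteq> L" using wsL ws by auto
        show ?thesis
        proof (cases "a \<in> G \<and> b \<in> G")
          case True
          define ws' where "ws' = (b \<circ> a) # mid"
          have "length ws' < length ws" by (simp add: ws ws'_def)
          moreover have "set ws' \<subseteq> L" using midL Gcomp True by (auto simp: ws'_def L_def)
          ultimately have ih: "ev ws' \<in> G \<or> finite (Fix (ev ws'))" using IH by metis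
          have e: "ev ws = a \<circ> ev mid \<circ> b" "ev ws' = b \<circ> a \<circ> ev mid" by (simp_all add: ws ws'_def comp_assoc)
          have bb: "bij b" using Gbij True by blast
          show ?thesis
          proof (cases "ev ws' \<in> G")
            case True
            have "ev ws = inv b \<circ> ev ws' \<circ> b" using e bb
              by (simp add: comp_assoc[symmetric] bij_is_inj inv_o_cancel)
            thus ?thesis using True \<open>a \<in> G \<and> b \<in> G\<close> Ginv Gcomp by auto
          next
            case False
            hence fin: "finite (Fix (ev ws'))" using ih by simp
            have "Fix (ev ws) \<subseteq> b -` Fix (ev ws')" by (rule fix_vimage) (simp add: e)
            moreover have "finite (b -` Fix (ev ws'))" using fin bb by (simp add: finite_vimageI bij_is_inj)
            ultimately show ?thesis using finite_subset by blast
          qed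
        next
          case nGG: False
          show ?thesis
          proof (cases "(a = s \<and> b = s') \<or> (a = s' \<and> b = s)")
            case True
            have ba: "b \<circ> a = id" "a \<circ> b = id" using True ss' s's by auto
            have bb: "bij b" using True bij_s bij_s' by auto
            have "length mid < length ws" by (simp add: ws)
            hence ih: "ev mid \<in> G \<or> finite (Fix (ev mid))" using IH midL by metis
            have e: "ev ws = a \<circ> ev mid \<circ> b" by (simp add: ws comp_assoc)
            show ?thesis
            proof (cases "ev mid = id")
              case True thus ?thesis using e ba Gid by simp
            next
              case False
              hence fin: "finite (Fix (ev mid))" using ih Gfin by blast
              have "Fix (ev ws) \<subseteq> b -` Fix (ev mid)"
              proof (rule fix_vimage)
                fix x assume "ev ws x = x"
                hence "b (a (ev mid (b x))) = b x" using e by simp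
                thus "ev mid (b x) = b x" using ba by (metis comp_apply id_apply)
              qed
              moreover have "finite (b -` Fix (ev mid))" using fin bb by (simp add: finite_vimageI bij_is_inj)
              ultimately show ?thesis using finite_subset by blast
            qed
          next
            case nInv: False
            have "finite (Fix (ev ws))"
            proof (rule main[OF wsL])
              show "id \<notin> set ws" using noid by (auto simp: in_set_conv_nth)
              show "ws \<noteq> []" using ws by simp
              show "\<forall>i<length ws. okp (ws!i) (ws!(Suc i mod length ws))"
              proof (intro allI impI)
                fix i assume i: "i < length ws"
                show "okp (ws!i) (ws!(Suc i mod length ws))"
                proof (cases "Suc i < length ws")
                  case True
                  thus ?thesis using nopair ss' s's by (auto simp: okp_def)
                next
                  case False
                  hence "Suc i = length ws" using i by simp
                  hence "ws!i = b" "ws!(Suc i mod length ws) = a" using ws by (auto simp: nth_append)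
                  thus ?thesis using nGG nInv by (auto simp: okp_def)
                qed
              qed
            qed
            thus ?thesis by simp
          qed
        qed
      qed
    qed
  qed
qed

lemma inv_ev: "\<forall>a\<in>set ws. bij a \<Longrightarrow> inv (ev ws) = ev (rev (map inv ws))"
proof (induction ws)
  case Nil thus ?case by (simp add: inv_id)
next
  case (Cons a ws)
  have "bij (ev ws)" using Cons.prems by (induction ws) (auto intro: bij_comp)
  moreover have "bij a" using Cons.prems by simp
  ultimately have "inv (a \<circ> ev ws) = inv (ev ws) \<circ> inv a" by (simp add: o_inv_distrib)
  moreover have "inv (ev ws) = ev (rev (map inv ws))" using Cons.IH Cons.prems by simp
  ultimately show ?case by (simp only: ev_Cons ev_append list.map rev.simps ev_Nil comp_id)
qed

lemma not_max: "\<not> maximal_cofinitary G"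
proof -
  define H where "H = ev ` {ws. set ws \<subseteq> L}"
  have sub: "Sym_subgroup H"
    unfolding Sym_subgroup_def
  proof (intro conjI ballI)
    show "H \<subseteq> {f. bij f}" using ev_bij by (auto simp: H_def)
    show "id \<in> H" unfolding H_def by (rule image_eqI[of _ _ "[]"]) auto
  next
    fix g h assume "g \<in> H" "h \<in> H"
    then obtain xs ys where "set xs \<subseteq> L" "set ys \<subseteq> L" "g = ev xs" "h = ev ys" by (auto simp: H_def)
    thus "g \<circ> h \<in> H" unfolding H_def by (intro image_eqI[of _ _ "xs @ ys"]) auto
  next
    fix g assume "g \<in> H"
    then obtain xs where xs: "set xs \<subseteq> L" "g = ev xs" by (auto simp: H_def)
    have "inv g = ev (rev (map inv xs))" using xs inv_ev L_bij by auto
    moreover have "set (rev (map inv xs)) \<subseteq> L" using xs Ginv inv_s inv_s' by (auto simp: L_def)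
    ultimately show "inv g \<in> H" by (auto simp: H_def)
  qed
  have cofH: "cofinitary H"
    unfolding cofinitary_def
  proof (intro conjI sub ballI impI)
    fix h assume "h \<in> H" "h \<noteq> id"
    then obtain xs where xs: "set xs \<subseteq> L" "h = ev xs" by (auto simp: H_def)
    hence "h \<in> G \<or> finite (Fix h)" using reduce by simp
    thus "finite {n. h n = n}" using Gfin \<open>h \<noteq> id\<close> by (auto simp: Fix_def)
  qed
  have "G \<subseteq> H"
  proof
    fix g assume "g \<in> G"
    thus "g \<in> H" unfolding H_def by (intro image_eqI[of _ _ "[g]"]) (auto simp: L_def)
  qed
  moreover have "s \<in> H" unfolding H_def by (intro image_eqI[of _ _ "[s]"]) (auto simp: L_def)
  ultimately have "G \<subset> H" using s_notin by blast
  thus ?thesis using cofH by (auto simp: maximal_cofinitary_def)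
qed

end


lemma Ksig_bounded: assumes "K_sigma G" shows "eventually_bounded G"
proof -
  obtain K :: "nat \<Rightarrow> (nat \<Rightarrow> nat) set" where K: "\<And>i. compact (K i)" "G \<subseteq> (\<Union>i. K i)" using assms unfolding K_sigma_def by blast
  have "\<exists>b. \<forall>g\<in>K i. g n \<le> b" for i n
  proof -
    have c: "compact ((\<lambda>g. g n) ` K i)"
      by (rule compact_continuous_image[OF continuous_on_subset[OF continuous_on_product_coordinates] K(1)]) simp
    show ?thesis
    proof (cases "K i = {}")
      case True thus ?thesis by simp
    next
      case False
      then obtain t where "t \<in> (\<lambda>g. g n) ` K i" "\<forall>x\<in>(\<lambda>g. g n) ` K i. x \<le> t"
        using compact_attains_sup[OF c] by blast
      thus ?thesis by auto
    qed
  qed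
  then obtain B where B: "\<And>i n g. g \<in> K i \<Longrightarrow> g n \<le> B i n" by metis
  define F where "F n = Suc (\<Sum>i\<le>n. B i n)" for n
  have "eventually_less g F" if gG: "g \<in> G" for g
  proof -
    obtain i where i: "g \<in> K i" using K(2) gG by blast
    have "{n. \<not> g n < F n} \<subseteq> {..<i}"
    proof
      fix n assume n: "n \<in> {n. \<not> g n < F n}"
      show "n \<in> {..<i}"
      proof (rule ccontr)
        assume "n \<notin> {..<i}" hence "i \<le> n" by simp
        hence "B i n \<le> (\<Sum>i\<le>n. B i n)" by (intro member_le_sum) auto
        hence "g n < F n" using B[OF i, of n] by (simp add: F_def)
        thus False using n by simp
      qed
    qed
    thus ?thesis by (simp add: eventually_less_def finite_subset)
  qed
  thus ?thesis by (auto simp: eventually_bounded_def)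
qed


lemma part1:
  assumes cG: "cofinitary G" and eb: "eventually_bounded G"
  shows "\<not> maximal_cofinitary G"
proof -
  obtain f0 where f0: "\<forall>g\<in>G. eventually_less g f0" using eb by (auto simp: eventually_bounded_def)
  define f where "f n = Suc (n + (\<Sum>i\<le>n. f0 i))" for n
  have mf: "mono f"
  proof (rule monoI)
    fix m n :: nat assume "m \<le> n"
    moreover have "(\<Sum>i\<le>m. f0 i) \<le> (\<Sum>i\<le>n. f0 i)" using \<open>m \<le> n\<close> by (intro sum_mono2) auto
    ultimately show "f m \<le> f n" by (simp add: f_def)
  qed
  have fgt: "\<And>n. n < f n" by (simp add: f_def)
  have f0f: "f0 n \<le> f n" for n
  proof -
    have "f0 n \<le> (\<Sum>i\<le>n. f0 i)" by (intro member_le_sum) auto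
    thus ?thesis by (simp add: f_def)
  qed
  have bnd: "\<forall>g\<in>G. finite {n. \<not> g n < f n}"
  proof
    fix g assume "g \<in> G"
    hence "finite {n. \<not> g n < f0 n}" using f0 by (simp add: eventually_less_def)
    moreover have "{n. \<not> g n < f n} \<subseteq> {n. \<not> g n < f0 n}" using f0f by (auto intro: less_le_trans)
    ultimately show "finite {n. \<not> g n < f n}" using finite_subset by blast
  qed
  obtain s s' S where sig: "s \<circ> s' = id" "s' \<circ> s = id" "\<forall>x. s x \<noteq> x" "\<forall>x. x < s x \<or> x < s' x"
     "\<forall>x. x \<notin> S \<longrightarrow> f x \<le> s x \<and> f x \<le> s' x" "\<forall>x y. x \<in> S \<longrightarrow> y \<in> S \<longrightarrow> x < y \<longrightarrow> f x \<le> y"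
     "infinite (- S)"
    using sigma_exists[OF mf fgt] by blast
  interpret W G f s s' S
    by (unfold_locales) (use cG bnd mf fgt sig in auto)
  show ?thesis by (rule not_max)
qed

theorem mainTheorem18:
  shows "(\<forall>G. cofinitary G \<and> eventually_bounded G \<longrightarrow> \<not> maximal_cofinitary G)
       \<and> (\<forall>G. maximal_cofinitary G \<longrightarrow> \<not> K_sigma G)"
  using part1 Ksig_bounded by (auto simp: maximal_cofinitary_def)

end
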